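(* Let $p>1$ and let $\varphi$ be an analytic self-map of $\mathbb{D}$ with $\varphi\in S^p$. If $D_\varphi:S^p\to S^p$ is bounded, then $C_\varphi:S^p\to S^p$ is bounded.
   Context: $\mathbb{D}$ is the open unit disk. For $p>1$, $H^p$ is the Hardy space on $\mathbb{D}$ with norm $\|g\|_{H^p}^p=\sup_{0<r<1}\int_0^{2\pi}|g(re^{i\theta})|^p\frac{d\theta}{2\pi}$; $S^p$ is the space of analytic $f$ on $\mathbb{D}$ with $f'\in H^p$, normed by $\|f\|_{S^p}=|f(0)|+\|f'\|_{H^p}$. $C_\varphi f=f\circ\varphi$ and $D_\varphi f=f'\circ\varphi$. *)

theory Defs
  imports "HOL-Analysis.Analysis"
begin

definition unit_disc :: "complex set" where
  "unit_disc = ball 0 1"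

definition integral_mean :: "real \<Rightarrow> (complex \<Rightarrow> complex) \<Rightarrow> real \<Rightarrow> real" where
  "integral_mean p g r =
     integral {0..2*pi} (\<lambda>\<theta>. norm (g (complex_of_real r * cis \<theta>)) powr p) / (2*pi)"

definition hardy :: "real \<Rightarrow> (complex \<Rightarrow> complex) set" where
  "hardy p = {g. g holomorphic_on unit_disc \<and>
                 bdd_above (integral_mean p g ` {0<..<1})}"

definition hardy_norm :: "real \<Rightarrow> (complex \<Rightarrow> complex) \<Rightarrow> real" where
  "hardy_norm p g = (SUP r\<in>{0<..<1}. integral_mean p g r) powr (1/p)"

definition Sp :: "real \<Rightarrow> (complex \<Rightarrow> complex) set" where
  "Sp p = {f. f holomorphic_on unit_disc \<and> deriv f \<in> hardy p}"

definition Sp_norm :: "real \<Rightarrow> (complex \<Rightarrow> complex) \<Rightarrow> real" where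
  "Sp_norm p f = norm (f 0) + hardy_norm p (deriv f)"

definition comp_op :: "(complex \<Rightarrow> complex) \<Rightarrow> (complex \<Rightarrow> complex) \<Rightarrow> (complex \<Rightarrow> complex)" where
  "comp_op \<phi> f = f \<circ> \<phi>"

definition deriv_comp_op :: "(complex \<Rightarrow> complex) \<Rightarrow> (complex \<Rightarrow> complex) \<Rightarrow> (complex \<Rightarrow> complex)" where
  "deriv_comp_op \<phi> f = deriv f \<circ> \<phi>"

definition bounded_on_Sp :: "real \<Rightarrow> ((complex \<Rightarrow> complex) \<Rightarrow> (complex \<Rightarrow> complex)) \<Rightarrow> bool" where
  "bounded_on_Sp p T \<longleftrightarrow>
     (\<forall>f\<in>Sp p. T f \<in> Sp p) \<and>
     (\<exists>C. \<forall>f\<in>Sp p. Sp_norm p (T f) \<le> C * Sp_norm p f)"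

end

theory Submission
  imports Defs "HOL-Complex_Analysis.Complex_Analysis"
begin

lemma continuous_on_powr_nonneg:
  fixes h :: "'a::topological_space \<Rightarrow> real"
  assumes "continuous_on S h" "\<And>x. x \<in> S \<Longrightarrow> h x \<ge> 0" "p > 0"
  shows "continuous_on S (\<lambda>x. h x powr p)"
  using assms unfolding continuous_on_def
  by (auto intro!: tendsto_powr' simp: eventually_at_filter)

lemma tangent_powr:
  fixes p m x :: real
  assumes p: "p \<ge> 1" and m: "m > 0" and x: "x \<ge> 0"
  shows "m powr p + p * m powr (p-1) * (x - m) \<le> x powr p"
proof (cases "x = 0")
  case True
  have E: "m powr (p-1) * m = m powr p" using powr_mult_base[of m "p-1"] m by (simp add: mult.commute)
  have "p * m powr (p-1) * (x - m) = - (p * m powr p)" using True E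
    by (simp add: mult.assoc)
  moreover have "m powr p * (1 - p) \<le> 0" using p by (simp add: mult_nonneg_nonpos)
  moreover have "m powr p * (1 - p) = m powr p - p * m powr p" by (simp add: algebra_simps)
  moreover have "x powr p = 0" using True by simp
  ultimately show ?thesis by linarith
next
  case False
  have xp: "x > 0" using x False by simp
  have "p * m powr (p-1) * (x - m) \<le> x powr p - m powr p"
  proof (rule f''_imp_f'[where C="{0<..}" and f="\<lambda>x. x powr p" and f'="\<lambda>x. p * x powr (p - 1)" and f''="\<lambda>x. p * ((p-1) * x powr (p-1-1))" and x=m and y=x])
    show "convex {0::real<..}" by simp
    show "\<And>x. x \<in> {0<..} \<Longrightarrow> ((\<lambda>x. x powr p) has_real_derivative p * x powr (p - 1)) (at x)"
      by (rule derivative_eq_intros | simp)+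
    show "\<And>x. x \<in> {0<..} \<Longrightarrow> ((\<lambda>x. p * x powr (p - 1)) has_real_derivative p * ((p - 1) * x powr (p - 1 - 1))) (at x)"
      by (rule derivative_eq_intros | simp)+
    show "\<And>x. x \<in> {0<..} \<Longrightarrow> 0 \<le> p * ((p - 1) * x powr (p - 1 - 1))" using p by simp
    show "m \<in> {0<..}" using m by simp
    show "x \<in> {0<..}" using xp by simp
  qed
  then show ?thesis by simp
qed

lemma two_point_powr:
  fixes a b p :: real
  assumes p: "p \<ge> 1" and a: "a \<ge> 0" and b: "b \<ge> 0"
  shows "(a + b) powr p \<le> 2 powr (p-1) * (a powr p + b powr p)"
proof (cases "a + b = 0")
  case True then show ?thesis using a b by simp
next
  case False
  define m where "m = (a+b)/2"
  have m: "m > 0" using a b False by (simp add: m_def)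
  have 1: "m powr p + p * m powr (p-1) * (a - m) \<le> a powr p" by (rule tangent_powr[OF p m a])
  have 2: "m powr p + p * m powr (p-1) * (b - m) \<le> b powr p" by (rule tangent_powr[OF p m b])
  have "p * m powr (p-1) * (a - m) + p * m powr (p-1) * (b - m) = 0"
    unfolding m_def by (simp add: algebra_simps)
  then have "2 * m powr p \<le> a powr p + b powr p"
    using 1 2 by linarith
  moreover have "m powr p = (a+b) powr p / 2 powr p" unfolding m_def
    using a b by (simp add: powr_divide)
  moreover have "2 powr p = 2 * 2 powr (p-1)" by (simp add: powr_diff)
  ultimately show ?thesis by (simp add: field_simps)
qed

lemma jensen_interval:
  fixes h :: "real \<Rightarrow> real"
  assumes p: "p \<ge> 1" and r: "0 \<le> r" "r \<le> 1"
    and hc: "continuous_on {0..r} h" and hn: "\<And>s. s \<in> {0..r} \<Longrightarrow> h s \<ge> 0"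
  shows "(integral {0..r} h) powr p \<le> integral {0..r} (\<lambda>s. h s powr p)"
proof -
  define m where "m = integral {0..r} h"
  have hpc: "continuous_on {0..r} (\<lambda>s. h s powr p)"
    using hc hn p by (intro continuous_on_powr_nonneg) auto
  have int1: "h integrable_on {0..r}" using hc integrable_continuous_real by blast
  have int2: "(\<lambda>s. h s powr p) integrable_on {0..r}" using hpc integrable_continuous_real by blast
  have m0: "m \<ge> 0" unfolding m_def using hn by (intro integral_nonneg int1) auto
  show ?thesis
  proof (cases "m = 0")
    case True
    then show ?thesis using p unfolding m_def[symmetric]
      by (simp add: hn integral_nonneg int2)
  next
    case False
    then have mp: "m > 0" using m0 by simp
    define c where "c = p * m powr (p-1)"
    have A1: "integral {0..r} (\<lambda>s. m powr p + c * (h s - m)) \<le> integral {0..r} (\<lambda>s. h s powr p)"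
    proof (rule integral_le[OF _ int2])
      have "continuous_on {0..r} (\<lambda>s. m powr p + c * (h s - m))"
        by (intro continuous_on_add continuous_on_const continuous_on_mult continuous_on_diff hc)
      then show "(\<lambda>s. m powr p + c * (h s - m)) integrable_on {0..r}"
        by (rule integrable_continuous_real)
      show "\<And>x. x \<in> {0..r} \<Longrightarrow> m powr p + c * (h x - m) \<le> h x powr p"
        unfolding c_def using tangent_powr[OF p mp] hn by blast
    qed
    have A2: "integral {0..r} (\<lambda>s. m powr p + c * (h s - m)) = r * m powr p + c * (m - r * m)"
    proof -
      have "integral {0..r} (\<lambda>s. m powr p + c * (h s - m)) = integral {0..r} (\<lambda>s. (m powr p - c * m) + c * h s)"
        by (simp add: algebra_simps)
      also have "\<dots> = r * (m powr p - c*m) + c * m"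
      proof -
        have "integral {0..r} (\<lambda>s. (m powr p - c * m) + c * h s) = integral {0..r} (\<lambda>s. m powr p - c * m) + integral {0..r} (\<lambda>s. c * h s)"
          by (intro integral_add integrable_on_mult_right int1 integrable_const_ivl)
        then show ?thesis using r unfolding m_def by simp
      qed
      finally show ?thesis by (simp add: algebra_simps)
    qed
    have A3: "c * m = p * m powr p" unfolding c_def using mp
      by (simp add: powr_mult_base mult.commute mult.left_commute)
    have A4: "m powr p \<le> r * m powr p + p * m powr p * (1 - r)"
    proof -
      have "0 \<le> (p - 1) * (1 - r) * m powr p" using p r by simp
      then show ?thesis by (simp add: algebra_simps)
    qed
    have "c * (m - r * m) = p * m powr p * (1 - r)" using A3 by (simp add: algebra_simps)
    with A1 A2 A4 show ?thesis unfolding m_def[symmetric] by linarith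
  qed
qed

lemma sum_powr_root:
  fixes a b p :: real
  assumes p: "p \<ge> 1" and a: "a \<ge> 0" and b: "b \<ge> 0"
  shows "(a powr p + b powr p) powr (1/p) \<le> a + b"
proof -
  have "a powr p = a * a powr (p-1)" using a
    by (cases "a = 0") (use p in \<open>auto simp: powr_mult_base\<close>)
  also have "\<dots> \<le> a * (a+b) powr (p-1)" using a b p by (intro mult_left_mono powr_mono2) auto
  finally have 1: "a powr p \<le> a * (a+b) powr (p-1)" .
  have "b powr p = b * b powr (p-1)" using b
    by (cases "b = 0") (use p in \<open>auto simp: powr_mult_base\<close>)
  also have "\<dots> \<le> b * (a+b) powr (p-1)" using a b p by (intro mult_left_mono powr_mono2) auto
  finally have 2: "b powr p \<le> b * (a+b) powr (p-1)" .
  have "(a+b) * (a+b) powr (p-1) = (a+b) powr p" using a b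
    by (cases "a + b = 0") (use p in \<open>auto simp: powr_mult_base\<close>)
  with 1 2 have "a powr p + b powr p \<le> (a+b) powr p" by (simp add: algebra_simps)
  then have "(a powr p + b powr p) powr (1/p) \<le> ((a+b) powr p) powr (1/p)"
    using p by (intro powr_mono2) auto
  also have "\<dots> = a + b" using p a b by (simp add: powr_powr)
  finally show ?thesis .
qed


lemma key_mean:
  fixes f :: "complex \<Rightarrow> complex"
  assumes p: "p \<ge> 1" and hf: "f holomorphic_on unit_disc"
    and bdd: "bdd_above (integral_mean p (deriv f) ` {0<..<1})"
    and r: "0 < r" "r < 1"
  shows "integral_mean p f r \<le> 2 powr (p-1) * (norm (f 0) powr p + (SUP s\<in>{0<..<1}. integral_mean p (deriv f) s))"
proof -
  define g where "g = deriv f"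
  define S where "S = (SUP s\<in>{0<..<1}. integral_mean p g s)"
  have od: "open unit_disc" by (simp add: unit_disc_def)
  have hg: "g holomorphic_on unit_disc" unfolding g_def using hf od by (rule holomorphic_deriv)
  have cg: "continuous_on unit_disc g" using hg holomorphic_on_imp_continuous_on by blast
  have inD: "complex_of_real s * cis t \<in> unit_disc" if "0 \<le> s" "s < 1" for s t
    using that by (simp add: unit_disc_def norm_mult)
  define H where "H = (\<lambda>x::real\<times>real. norm (g (complex_of_real (snd x) * cis (fst x))) powr p)"
  have c0: "continuous_on (UNIV \<times> {0..r}) (\<lambda>x::real\<times>real. g (complex_of_real (snd x) * cis (fst x)))"
  proof (rule continuous_on_compose2[OF cg])
    show "continuous_on (UNIV \<times> {0..r}) (\<lambda>x::real\<times>real. complex_of_real (snd x) * cis (fst x))"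
      by (intro continuous_intros)
    show "(\<lambda>x::real\<times>real. complex_of_real (snd x) * cis (fst x)) ` (UNIV \<times> {0..r}) \<subseteq> unit_disc"
      using r by (auto intro!: inD)
  qed
  have contH: "continuous_on (UNIV \<times> {0..r}) H"
    unfolding H_def using p by (intro continuous_on_powr_nonneg continuous_intros c0) auto
  have Hnn: "H x \<ge> 0" for x unfolding H_def by simp
  have Hsimp: "H (t,s) = norm (g (complex_of_real s * cis t)) powr p" for t s unfolding H_def by simp
  have cn: "continuous_on {0..r} (\<lambda>s. norm (g (complex_of_real s * cis t)))" for t
    by (rule continuous_on_compose2[OF continuous_on_norm_id, of _ _ UNIV])
       (auto intro!: continuous_on_compose2[OF c0, of _ "\<lambda>s. (t, s)", simplified] continuous_intros)
  have step1: "norm (f (complex_of_real r * cis t)) \<le> norm (f 0) + integral {0..r} (\<lambda>s. norm (g (complex_of_real s * cis t)))" for t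
  proof -
    have "((\<lambda>s. cis t * g (complex_of_real s * cis t)) has_integral
            f (complex_of_real r * cis t) - f (complex_of_real 0 * cis t)) {0..r}"
    proof (rule fundamental_theorem_of_calculus)
      show "0 \<le> r" using r by simp
      fix x assume x: "x \<in> {0..r}"
      have d1: "((\<lambda>s. complex_of_real s * cis t) has_vector_derivative cis t) (at x within {0..r})"
        by (auto intro!: derivative_eq_intros)
      have d2: "(f has_field_derivative g (complex_of_real x * cis t)) (at (complex_of_real x * cis t) within (\<lambda>s. complex_of_real s * cis t) ` {0..r})"
        unfolding g_def using x r by (intro holomorphic_derivI[OF hf od] inD) auto
      show "((\<lambda>s. f (complex_of_real s * cis t)) has_vector_derivative cis t * g (complex_of_real x * cis t)) (at x within {0..r})"
        using field_vector_diff_chain_within[OF d1 d2] by (simp add: o_def)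
    qed
    then have HI: "((\<lambda>s. cis t * g (complex_of_real s * cis t)) has_integral f (complex_of_real r * cis t) - f 0) {0..r}"
      by simp
    have I: "integral {0..r} (\<lambda>s. cis t * g (complex_of_real s * cis t)) = f (complex_of_real r * cis t) - f 0"
      using HI by (rule integral_unique)
    have int: "(\<lambda>s. cis t * g (complex_of_real s * cis t)) integrable_on {0..r}"
      using HI by (rule has_integral_integrable)
    have "norm (f (complex_of_real r * cis t) - f 0) \<le> integral {0..r} (\<lambda>s. norm (g (complex_of_real s * cis t)))"
      unfolding I[symmetric]
      by (rule integral_norm_bound_integral[OF int integrable_continuous_real[OF cn]]) (simp add: norm_mult)
    then show ?thesis using norm_triangle_ineq2[of "f (complex_of_real r * cis t)" "f 0"] by linarith
  qed

  have step2: "norm (f (complex_of_real r * cis t)) powr p \<le> 2 powr (p-1) * (norm (f 0) powr p + integral {0..r} (\<lambda>s. H (t,s)))" for t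
  proof -
    define Ii where "Ii = integral {0..r} (\<lambda>s. norm (g (complex_of_real s * cis t)))"
    have Ii0: "Ii \<ge> 0" unfolding Ii_def
      by (intro integral_nonneg integrable_continuous_real cn) auto
    have a: "norm (f (complex_of_real r * cis t)) powr p \<le> (norm (f 0) + Ii) powr p"
      using step1[of t] p unfolding Ii_def by (intro powr_mono2) auto
    have b: "(norm (f 0) + Ii) powr p \<le> 2 powr (p-1) * (norm (f 0) powr p + Ii powr p)"
      using p Ii0 by (intro two_point_powr) auto
    have c: "Ii powr p \<le> integral {0..r} (\<lambda>s. H (t,s))"
      unfolding Ii_def Hsimp using p r by (intro jensen_interval cn) auto
    have "2 powr (p-1) * (norm (f 0) powr p + Ii powr p) \<le> 2 powr (p-1) * (norm (f 0) powr p + integral {0..r} (\<lambda>s. H (t,s)))"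
      using c by (intro mult_left_mono) auto
    with a b show ?thesis by linarith
  qed
  have cf: "continuous_on unit_disc f" using hf holomorphic_on_imp_continuous_on by blast
  have contL: "continuous_on UNIV (\<lambda>t. norm (f (complex_of_real r * cis t)) powr p)"
  proof -
    have "continuous_on UNIV (\<lambda>t. f (complex_of_real r * cis t))"
      by (rule continuous_on_compose2[OF cf]) (use r inD in \<open>auto intro!: continuous_intros\<close>)
    then show ?thesis using p by (intro continuous_on_powr_nonneg continuous_intros) auto
  qed
  have contR: "continuous_on UNIV (\<lambda>t. integral (cbox 0 r) (\<lambda>s. H (t,s)))"
    by (rule integral_continuous_on_param) (use contH in \<open>simp add: cbox_interval case_prod_unfold\<close>)
  have intL: "(\<lambda>t. norm (f (complex_of_real r * cis t)) powr p) integrable_on {0..2*pi}"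
    by (rule integrable_continuous_real) (rule continuous_on_subset[OF contL], simp)
  have intR0: "(\<lambda>t. integral {0..r} (\<lambda>s. H (t,s))) integrable_on {0..2*pi}"
    by (rule integrable_continuous_real) (rule continuous_on_subset[OF contR[unfolded cbox_interval]], simp)
  have intR: "(\<lambda>t. 2 powr (p-1) * (norm (f 0) powr p + integral {0..r} (\<lambda>s. H (t,s)))) integrable_on {0..2*pi}"
    by (intro integrable_on_mult_right integrable_add integrable_const_ivl intR0)
  have step3: "integral {0..2*pi} (\<lambda>t. norm (f (complex_of_real r * cis t)) powr p)
      \<le> integral {0..2*pi} (\<lambda>t. 2 powr (p-1) * (norm (f 0) powr p + integral {0..r} (\<lambda>s. H (t,s))))"
    by (rule integral_le[OF intL intR]) (rule step2)
  have eq3: "integral {0..2*pi} (\<lambda>t. 2 powr (p-1) * (norm (f 0) powr p + integral {0..r} (\<lambda>s. H (t,s))))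
      = 2 powr (p-1) * (2*pi * norm (f 0) powr p + integral {0..2*pi} (\<lambda>t. integral {0..r} (\<lambda>s. H (t,s))))"
  proof -
    have "integral {0..2*pi} (\<lambda>t. norm (f 0) powr p + integral {0..r} (\<lambda>s. H (t,s)))
        = integral {0..2*pi} (\<lambda>t. norm (f 0) powr p) + integral {0..2*pi} (\<lambda>t. integral {0..r} (\<lambda>s. H (t,s)))"
      by (intro integral_add integrable_const_ivl intR0)
    then show ?thesis by simp
  qed
  have swap: "integral {0..2*pi} (\<lambda>t. integral {0..r} (\<lambda>s. H (t,s))) = integral {0..r} (\<lambda>s. integral {0..2*pi} (\<lambda>t. H (t,s)))"
  proof -
    have "continuous_on (cbox (0,0) (2*pi,r)) (\<lambda>(x,y). H (x,y))"
      unfolding case_prod_eta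
      by (rule continuous_on_subset[OF contH]) (auto simp: cbox_Pair_eq cbox_interval)
    from integral_swap_continuous[OF this] show ?thesis by (simp add: cbox_interval)
  qed
  define K where "K s = integral {0..2*pi} (\<lambda>t. H (t,s))" for s
  have Kmean: "K s = 2*pi * integral_mean p g s" for s
    unfolding K_def integral_mean_def Hsimp by simp
  have contK: "continuous_on {0..r} K"
  proof -
    have "continuous_on ({0..r} \<times> cbox 0 (2*pi)) (\<lambda>(s,t). H (t,s))"
      unfolding case_prod_unfold
    proof (rule continuous_on_compose2[OF contH, of _ "\<lambda>x. (snd x, fst x)"])
      show "continuous_on ({0..r} \<times> cbox 0 (2*pi)) (\<lambda>x::real\<times>real. (snd x, fst x))"
        by (intro continuous_on_Pair continuous_on_snd continuous_on_fst continuous_on_id)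
      show "(\<lambda>x::real\<times>real. (snd x, fst x)) ` ({0..r} \<times> cbox 0 (2*pi)) \<subseteq> UNIV \<times> {0..r}" by auto
    qed
    from integral_continuous_on_param[OF this] show ?thesis
      unfolding K_def by (simp add: cbox_interval)
  qed
  have K0: "K s \<ge> 0" if "s \<in> {0..r}" for s
  proof -
    have "continuous_on UNIV (\<lambda>t. H (t,s))"
    proof (rule continuous_on_compose2[OF contH, of _ "\<lambda>t. (t, s)"])
      show "continuous_on UNIV (\<lambda>t::real. (t, s))"
        by (intro continuous_on_Pair continuous_on_const continuous_on_id)
      show "(\<lambda>t::real. (t, s)) ` UNIV \<subseteq> UNIV \<times> {0..r}" using that by auto
    qed
    then have "continuous_on {0..2*pi} (\<lambda>t. H (t,s))" by (rule continuous_on_subset) simp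
    then have "(\<lambda>t. H (t,s)) integrable_on {0..2*pi}" by (rule integrable_continuous_real)
    then show ?thesis unfolding K_def using Hnn by (rule integral_nonneg)
  qed
  have Kle: "K s \<le> 2*pi*S" if "s \<in> {0<..r}" for s
  proof -
    have "integral_mean p g s \<le> S" unfolding S_def
      using that r bdd unfolding g_def by (intro cSUP_upper) auto
    then show ?thesis unfolding Kmean by simp
  qed
  have S0: "S \<ge> 0"
  proof -
    have "0 \<le> K r" using K0 r by simp
    also have "\<dots> \<le> 2*pi*S" using Kle r by simp
    finally show ?thesis using pi_gt_zero by (simp add: zero_le_mult_iff)
  qed
  define K' where "K' s = min (K s) (2*pi*S)" for s
  have "integral {0..r} K = integral {0..r} K'"
    by (rule integral_spike[of "{0}"]) (use Kle in \<open>auto simp: K'_def min_def\<close>)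
  also have "\<dots> \<le> integral {0..r} (\<lambda>s. 2*pi*S)"
  proof (rule integral_le)
    show "K' integrable_on {0..r}" unfolding K'_def
      by (intro integrable_continuous_real continuous_on_min contK continuous_on_const)
  qed (auto simp: K'_def)
  also have "\<dots> \<le> 2*pi*S" using r S0 by (simp add: mult_left_le_one_le)
  finally have step5: "integral {0..r} K \<le> 2*pi*S" .
  have "integral {0..2*pi} (\<lambda>t. norm (f (complex_of_real r * cis t)) powr p)
       \<le> 2 powr (p-1) * (2*pi * norm (f 0) powr p + 2*pi*S)"
  proof -
    have L1: "integral {0..2*pi} (\<lambda>t. norm (f (complex_of_real r * cis t)) powr p)
       \<le> 2 powr (p-1) * (2*pi * norm (f 0) powr p + integral {0..r} K)"
      using step3 eq3 swap unfolding K_def by simp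
    have "2 powr (p-1) * (2*pi * norm (f 0) powr p + integral {0..r} K) \<le> 2 powr (p-1) * (2*pi * norm (f 0) powr p + 2*pi*S)"
      using step5 by (intro mult_left_mono) auto
    with L1 show ?thesis by linarith
  qed
  then show ?thesis unfolding integral_mean_def S_def g_def
    by (simp add: divide_le_eq algebra_simps)
qed

lemma mean_nonneg:
  assumes p: "p > 0" and hg: "g holomorphic_on unit_disc" and r: "0 \<le> r" "r < 1"
  shows "integral_mean p g r \<ge> 0"
proof -
  have cg: "continuous_on unit_disc g" using hg holomorphic_on_imp_continuous_on by blast
  have "continuous_on UNIV (\<lambda>t. g (complex_of_real r * cis t))"
    by (rule continuous_on_compose2[OF cg]) (use r in \<open>auto intro!: continuous_intros simp: unit_disc_def norm_mult\<close>)
  then have "continuous_on UNIV (\<lambda>t. norm (g (complex_of_real r * cis t)) powr p)"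
    using p by (intro continuous_on_powr_nonneg continuous_intros) auto
  then have "continuous_on {0..2*pi} (\<lambda>t. norm (g (complex_of_real r * cis t)) powr p)"
    by (rule continuous_on_subset) simp
  then have "(\<lambda>t. norm (g (complex_of_real r * cis t)) powr p) integrable_on {0..2*pi}"
    by (rule integrable_continuous_real)
  then have "integral {0..2*pi} (\<lambda>t. norm (g (complex_of_real r * cis t)) powr p) \<ge> 0"
    by (rule integral_nonneg) simp
  then show ?thesis unfolding integral_mean_def by simp
qed

lemma Sp_in_hardy:
  assumes p: "p \<ge> 1" and f: "f \<in> Sp p"
  shows "f \<in> hardy p" "hardy_norm p f \<le> 2 * Sp_norm p f"
proof -
  have od: "open unit_disc" by (simp add: unit_disc_def)
  have hf: "f holomorphic_on unit_disc" and bdd: "bdd_above (integral_mean p (deriv f) ` {0<..<1})"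
    using f by (auto simp: Sp_def hardy_def)
  have hdf: "deriv f holomorphic_on unit_disc" using hf od by (rule holomorphic_deriv)
  define S where "S = (SUP s\<in>{0<..<1}. integral_mean p (deriv f) s)"
  define B where "B = 2 powr (p-1) * (norm (f 0) powr p + S)"
  have mb: "integral_mean p f r \<le> B" if "r \<in> {0<..<1}" for r
    unfolding B_def S_def using key_mean[OF p hf bdd] that by auto
  have bddf: "bdd_above (integral_mean p f ` {0<..<1})" by (rule bdd_aboveI2) (rule mb)
  show "f \<in> hardy p" using hf bddf by (simp add: hardy_def)
  have half: "(1/2::real) \<in> {0<..<1}" by simp
  have S0: "S \<ge> 0"
  proof -
    have "0 \<le> integral_mean p (deriv f) (1/2)" using p hdf by (intro mean_nonneg) auto
    also have "\<dots> \<le> S" unfolding S_def by (rule cSUP_upper[OF half bdd])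
    finally show ?thesis .
  qed
  define T where "T = (SUP r\<in>{0<..<1}. integral_mean p f r)"
  have T0: "T \<ge> 0"
  proof -
    have "0 \<le> integral_mean p f (1/2)" using p hf by (intro mean_nonneg) auto
    also have "\<dots> \<le> T" unfolding T_def by (rule cSUP_upper[OF half bddf])
    finally show ?thesis .
  qed
  have TB: "T \<le> B" unfolding T_def by (rule cSUP_least) (auto intro: mb)
  have "hardy_norm p f = T powr (1/p)" unfolding hardy_norm_def T_def ..
  also have "\<dots> \<le> B powr (1/p)" using T0 TB p by (intro powr_mono2) auto
  also have "\<dots> = (2 powr (p-1)) powr (1/p) * (norm (f 0) powr p + S) powr (1/p)"
    unfolding B_def using S0 by (simp add: powr_mult)
  also have "\<dots> \<le> 2 * (norm (f 0) + S powr (1/p))"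
  proof (rule mult_mono)
    have "((2::real) powr (p-1)) powr (1/p) = 2 powr ((p-1)/p)" by (simp add: powr_powr)
    also have "\<dots> \<le> 2 powr 1" using p by (intro powr_mono) auto
    finally show "((2::real) powr (p-1)) powr (1/p) \<le> 2" by simp
    have "(S powr (1/p)) powr p = S" using p S0 by (simp add: powr_powr)
    then have "(norm (f 0) powr p + S) powr (1/p) = (norm (f 0) powr p + (S powr (1/p)) powr p) powr (1/p)" by simp
    also have "\<dots> \<le> norm (f 0) + S powr (1/p)" using p by (intro sum_powr_root) auto
    finally show "(norm (f 0) powr p + S) powr (1/p) \<le> norm (f 0) + S powr (1/p)" .
  qed auto
  also have "\<dots> = 2 * Sp_norm p f" unfolding Sp_norm_def hardy_norm_def S_def ..
  finally show "hardy_norm p f \<le> 2 * Sp_norm p f" .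
qed

lemma inD_lemma: "r \<in> {0<..<1} \<Longrightarrow> complex_of_real r * cis t \<in> unit_disc"
  by (simp add: unit_disc_def norm_mult)

lemma hardy_cong:
  assumes "\<And>z. z \<in> unit_disc \<Longrightarrow> g z = h z"
  shows "g \<in> hardy p \<longleftrightarrow> h \<in> hardy p" "hardy_norm p g = hardy_norm p h"
proof -
  have m: "integral_mean p g r = integral_mean p h r" if "r \<in> {0<..<1}" for r
    unfolding integral_mean_def using assms inD_lemma[OF that] by (simp cong: integral_cong)
  have hc: "g holomorphic_on unit_disc \<longleftrightarrow> h holomorphic_on unit_disc"
    by (rule holomorphic_cong) (auto simp: assms)
  have im: "integral_mean p g ` {0<..<1} = integral_mean p h ` {0<..<1}"
    by (rule image_cong) (auto simp: m)
  show "g \<in> hardy p \<longleftrightarrow> h \<in> hardy p" unfolding hardy_def using hc im by simp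
  show "hardy_norm p g = hardy_norm p h" unfolding hardy_norm_def using im by simp
qed

lemma deriv_cong_disc:
  assumes "\<And>z. z \<in> unit_disc \<Longrightarrow> g z = h z" "z \<in> unit_disc"
  shows "deriv g z = deriv h z"
proof (rule deriv_cong_ev)
  show "eventually (\<lambda>x. g x = h x) (nhds z)"
    using assms unfolding eventually_nhds by (intro exI[of _ unit_disc]) (auto simp: unit_disc_def)
qed simp

lemma primitive_disc:
  assumes "f holomorphic_on unit_disc"
  obtains F where "F holomorphic_on unit_disc" "\<And>z. z \<in> unit_disc \<Longrightarrow> deriv F z = f z" "F 0 = 0"
proof -
  have od: "open unit_disc" and cd: "convex unit_disc" by (simp_all add: unit_disc_def)
  obtain G where G: "\<And>x. x \<in> unit_disc \<Longrightarrow> (G has_field_derivative f x) (at x within unit_disc)"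
    using holomorphic_convex_primitive'[OF cd od assms] by blast
  define F where "F z = G z - G 0" for z
  have D: "(F has_field_derivative f x) (at x)" if "x \<in> unit_disc" for x
  proof -
    have "(G has_field_derivative f x) (at x)" using G[OF that] at_within_open[OF that od] by simp
    then show ?thesis unfolding F_def[abs_def] using DERIV_diff[of G "f x" x, OF _ DERIV_const[of "G 0"]] by simp
  qed
  show ?thesis
  proof
    show "F holomorphic_on unit_disc" unfolding holomorphic_on_def field_differentiable_def
      using D by (blast intro: has_field_derivative_at_within)
    show "deriv F z = f z" if "z \<in> unit_disc" for z using D[OF that] by (rule DERIV_imp_deriv)
    show "F 0 = 0" by (simp add: F_def)
  qed
qed

theorem corollary3p4:
  fixes p :: real and \<phi> :: "complex \<Rightarrow> complex"
  assumes "p > 1"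
    and "\<phi> holomorphic_on unit_disc"
    and "\<phi> ` unit_disc \<subseteq> unit_disc"
    and "\<phi> \<in> Sp p"
    and "bounded_on_Sp p (deriv_comp_op \<phi>)"
  shows "bounded_on_Sp p (comp_op \<phi>)"
proof -
  have p: "p \<ge> 1" using assms(1) by simp
  have od: "open unit_disc" by (simp add: unit_disc_def)
  have zD: "(0::complex) \<in> unit_disc" by (simp add: unit_disc_def)
  from assms(5) have D1: "\<And>f. f \<in> Sp p \<Longrightarrow> deriv f \<circ> \<phi> \<in> Sp p"
    and "\<exists>C. \<forall>f\<in>Sp p. Sp_norm p (deriv f \<circ> \<phi>) \<le> C * Sp_norm p f"
    unfolding bounded_on_Sp_def deriv_comp_op_def by auto
  then obtain C where C: "\<And>f. f \<in> Sp p \<Longrightarrow> Sp_norm p (deriv f \<circ> \<phi>) \<le> C * Sp_norm p f" by blast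
  have main: "f \<circ> \<phi> \<in> Sp p \<and> Sp_norm p (f \<circ> \<phi>) \<le> (2 * max C 0) * Sp_norm p f" if f: "f \<in> Sp p" for f
  proof -
    have hf: "f holomorphic_on unit_disc" using f by (simp add: Sp_def)
    have fH: "f \<in> hardy p" and fN: "hardy_norm p f \<le> 2 * Sp_norm p f" using Sp_in_hardy[OF p f] by auto
    obtain F where hF: "F holomorphic_on unit_disc" and dF: "\<And>z. z \<in> unit_disc \<Longrightarrow> deriv F z = f z"
      and F0: "F 0 = 0" using primitive_disc[OF hf] by blast
    have FSp: "F \<in> Sp p" using hF hardy_cong(1)[of "deriv F" f p] dF fH by (simp add: Sp_def)
    have FN: "Sp_norm p F = hardy_norm p f" using hardy_cong(2)[of "deriv F" f p] dF F0
      by (simp add: Sp_norm_def)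
    have E: "(deriv F \<circ> \<phi>) z = (f \<circ> \<phi>) z" if "z \<in> unit_disc" for z
      using dF assms(3) that by auto
    have E2: "deriv (deriv F \<circ> \<phi>) z = deriv (f \<circ> \<phi>) z" if "z \<in> unit_disc" for z
      by (rule deriv_cong_disc[OF E that])
    have Dsp: "deriv F \<circ> \<phi> \<in> Sp p" by (rule D1[OF FSp])
    have hfp: "(f \<circ> \<phi>) holomorphic_on unit_disc"
      by (rule holomorphic_on_compose_gen[OF assms(2) hf assms(3)])
    have "f \<circ> \<phi> \<in> Sp p"
      using Dsp hfp hardy_cong(1)[of "deriv (deriv F \<circ> \<phi>)" "deriv (f \<circ> \<phi>)" p] E2
      by (simp add: Sp_def)
    moreover have "Sp_norm p (f \<circ> \<phi>) = Sp_norm p (deriv F \<circ> \<phi>)"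
      using hardy_cong(2)[of "deriv (deriv F \<circ> \<phi>)" "deriv (f \<circ> \<phi>)" p] E2 E[OF zD]
      by (simp add: Sp_norm_def)
    moreover have "Sp_norm p (deriv F \<circ> \<phi>) \<le> C * hardy_norm p f" using C[OF FSp] FN by simp
    moreover have "C * hardy_norm p f \<le> max C 0 * hardy_norm p f"
      by (intro mult_right_mono) (auto simp: hardy_norm_def)
    moreover have "max C 0 * hardy_norm p f \<le> max C 0 * (2 * Sp_norm p f)"
      using fN by (intro mult_left_mono) auto
    ultimately show ?thesis by (simp add: mult.assoc)
  qed
  show ?thesis unfolding bounded_on_Sp_def comp_op_def
    using main by blast
qed


end
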